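(* Let $(X,d)$ be a compact metric space and $F:X\to 2^X$ a continuous set-valued map. Then the projection $\pi_0:\mathrm{Orb}_r(X)\to X$, $\pi_0((x_n))=x_0$, is an open map (with $\mathrm{Orb}_r(X)$ carrying the subspace topology of the product topology).
   Context: $2^X$ is the family of nonempty compact subsets of $X$. A set-valued map $F:X\to 2^X$ is upper semicontinuous if for every $x$ and open $U\supset F(x)$ there is a neighborhood $V$ of $x$ with $F(y)\subset U$ for $y\in V$; lower semicontinuous if for every $x$ and open $U$ with $F(x)\cap U\ne\emptyset$ there is a neighborhood $V$ of $x$ with $F(y)\cap U\neq\emptyset$ for $y\in V$; continuous if both. $\mathrm{Orb}_r(X)=\{(x_0,x_1,\dots)\in X^{\mathbb N}: x_{n+1}\in F(x_n)\ \forall n\}$. *)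

theory Defs
  imports "HOL-Analysis.Analysis"
begin

definition setvalued_map :: "'a::metric_space set \<Rightarrow> ('a \<Rightarrow> 'a set) \<Rightarrow> bool" where
  "setvalued_map X F \<longleftrightarrow> (\<forall>x\<in>X. F x \<noteq> {} \<and> compact (F x) \<and> F x \<subseteq> X)"

definition usc_on :: "'a::topological_space set \<Rightarrow> ('a \<Rightarrow> 'a set) \<Rightarrow> bool" where
  "usc_on X F \<longleftrightarrow> (\<forall>x\<in>X. \<forall>U. openin (top_of_set X) U \<and> F x \<subseteq> U \<longrightarrow>
      (\<exists>V. openin (top_of_set X) V \<and> x \<in> V \<and> (\<forall>y\<in>V. F y \<subseteq> U)))"

definition lsc_on :: "'a::topological_space set \<Rightarrow> ('a \<Rightarrow> 'a set) \<Rightarrow> bool" where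
  "lsc_on X F \<longleftrightarrow> (\<forall>x\<in>X. \<forall>U. openin (top_of_set X) U \<and> F x \<inter> U \<noteq> {} \<longrightarrow>
      (\<exists>V. openin (top_of_set X) V \<and> x \<in> V \<and> (\<forall>y\<in>V. F y \<inter> U \<noteq> {})))"

definition continuous_setvalued_on :: "'a::topological_space set \<Rightarrow> ('a \<Rightarrow> 'a set) \<Rightarrow> bool" where
  "continuous_setvalued_on X F \<longleftrightarrow> usc_on X F \<and> lsc_on X F"

definition Orb :: "'a set \<Rightarrow> ('a \<Rightarrow> 'a set) \<Rightarrow> (nat \<Rightarrow> 'a) set" where
  "Orb X F = {x. (\<forall>n. x n \<in> X) \<and> (\<forall>n. x (Suc n) \<in> F (x n))}"

end

theory Submission
  imports Defs
begin

lemma orb_exists: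
  assumes sv: "setvalued_map X F" and y: "y \<in> X"
  shows "\<exists>z\<in>Orb X F. z 0 = y"
proof -
  define z where "z = rec_nat y (\<lambda>_ p. SOME q. q \<in> F p)"
  have z0: "z 0 = y" and zS: "\<And>n. z (Suc n) = (SOME q. q \<in> F (z n))" by (simp_all add: z_def)
  have X: "z n \<in> X" for n
  proof (induction n)
    case 0 then show ?case using z0 y by simp
  next
    case (Suc n)
    then have "F (z n) \<noteq> {}" "F (z n) \<subseteq> X" using sv by (auto simp: setvalued_map_def)
    then show ?case unfolding zS by (metis equals0I someI_ex subsetD)
  qed
  have "z (Suc n) \<in> F (z n)" for n
  proof -
    have "F (z n) \<noteq> {}" using sv X by (auto simp: setvalued_map_def)
    then show ?thesis unfolding zS by (metis equals0I someI_ex)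
  qed
  then show ?thesis using X z0 by (auto simp: Orb_def)
qed

lemma core:
  assumes sv: "setvalued_map X F" and lsc: "lsc_on X F"
  shows "\<And>x U. x \<in> Orb X F \<Longrightarrow> (\<forall>i\<le>N. openin (top_of_set X) (U i) \<and> x i \<in> U i) \<Longrightarrow>
     \<exists>V. openin (top_of_set X) V \<and> x 0 \<in> V \<and> (\<forall>y\<in>V. \<exists>z\<in>Orb X F. z 0 = y \<and> (\<forall>i\<le>N. z i \<in> U i))"
proof (induction N)
  case 0
  show ?case
  proof (intro exI conjI ballI)
    show "openin (top_of_set X) (U 0)" "x 0 \<in> U 0" using 0 by auto
    fix y assume "y \<in> U 0"
    then have "y \<in> X" using 0 openin_imp_subset by blast
    then obtain z where "z \<in> Orb X F" "z 0 = y" using orb_exists[OF sv] by blast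
    then show "\<exists>z\<in>Orb X F. z 0 = y \<and> (\<forall>i\<le>0. z i \<in> U i)" using \<open>y \<in> U 0\<close> by auto
  qed
next
  case (Suc N)
  have xs: "(\<lambda>n. x (Suc n)) \<in> Orb X F" using Suc.prems(1) by (auto simp: Orb_def)
  have "\<forall>i\<le>N. openin (top_of_set X) (U (Suc i)) \<and> x (Suc i) \<in> U (Suc i)" using Suc.prems(2) by auto
  from Suc.IH[OF xs this] obtain V' where V': "openin (top_of_set X) V'" "x 1 \<in> V'"
    "\<forall>y\<in>V'. \<exists>z\<in>Orb X F. z 0 = y \<and> (\<forall>i\<le>N. z i \<in> U (Suc i))" by auto
  have x0: "x 0 \<in> X" and x1: "x 1 \<in> F (x 0)" using Suc.prems(1) by (auto simp: Orb_def)
  then have "F (x 0) \<inter> V' \<noteq> {}" using V' by auto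
  then obtain V'' where V'': "openin (top_of_set X) V''" "x 0 \<in> V''" "\<forall>y\<in>V''. F y \<inter> V' \<noteq> {}"
    using lsc x0 V'(1) unfolding lsc_on_def by blast
  have U0: "openin (top_of_set X) (U 0)" "x 0 \<in> U 0" using Suc.prems(2) by auto
  show ?case
  proof (intro exI conjI ballI)
    show "openin (top_of_set X) (V'' \<inter> U 0)" using V'' U0 by auto
    show "x 0 \<in> V'' \<inter> U 0" using V'' U0 by auto
    fix y assume y: "y \<in> V'' \<inter> U 0"
    then have yX: "y \<in> X" using U0 openin_imp_subset by blast
    obtain w where w: "w \<in> F y" "w \<in> V'" using V''(3) y by blast
    obtain z where z: "z \<in> Orb X F" "z 0 = w" "\<forall>i\<le>N. z i \<in> U (Suc i)" using V'(3) w(2) by blast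
    define z' where "z' = (\<lambda>n. case n of 0 \<Rightarrow> y | Suc m \<Rightarrow> z m)"
    have "z' \<in> Orb X F"
    proof -
      have "z' n \<in> X" for n using z yX by (cases n) (auto simp: z'_def Orb_def)
      moreover have "z' (Suc n) \<in> F (z' n)" for n using z w by (cases n) (auto simp: z'_def Orb_def)
      ultimately show ?thesis by (auto simp: Orb_def)
    qed
    moreover have "\<forall>i\<le>Suc N. z' i \<in> U i"
    proof (intro allI impI)
      fix i assume "i \<le> Suc N"
      then show "z' i \<in> U i" using y z by (cases i) (auto simp: z'_def)
    qed
    moreover have "z' 0 = y" by (simp add: z'_def)
    ultimately show "\<exists>z\<in>Orb X F. z 0 = y \<and> (\<forall>i\<le>Suc N. z i \<in> U i)" by blast
  qed
qed

theorem corollary3p3: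
  fixes X :: "'a::metric_space set" and F :: "'a \<Rightarrow> 'a set"
  assumes "compact X"
    and "setvalued_map X F"
    and "continuous_setvalued_on X F"
  shows "open_map (subtopology (product_topology (\<lambda>_::nat. top_of_set X) UNIV) (Orb X F))
                  (top_of_set X) (\<lambda>x. x 0)"
  unfolding open_map_def
proof (intro allI impI)
  have lsc: "lsc_on X F" using assms(3) by (simp add: continuous_setvalued_on_def)
  fix W assume "openin (subtopology (product_topology (\<lambda>_::nat. top_of_set X) UNIV) (Orb X F)) W"
  then obtain S where S: "openin (product_topology (\<lambda>_::nat. top_of_set X) UNIV) S" and W: "W = S \<inter> Orb X F"
    by (auto simp: openin_subtopology)
  show "openin (top_of_set X) ((\<lambda>x. x 0) ` W)"
  proof (subst openin_subopen, intro ballI)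
    fix y0 assume "y0 \<in> (\<lambda>x. x 0) ` W"
    then obtain x where x: "x \<in> S" "x \<in> Orb X F" and y0: "y0 = x 0" using W by auto
    obtain U where U: "finite {i. U i \<noteq> X}" "\<forall>i. openin (top_of_set X) (U i)"
      "x \<in> PiE UNIV U" "PiE UNIV U \<subseteq> S"
      using S x(1) unfolding openin_product_topology_alt by auto
    obtain k where k: "{i. U i \<noteq> X} \<subseteq> {..<k}" using U(1) finite_nat_bounded by blast
    have "\<forall>i\<le>k. openin (top_of_set X) (U i) \<and> x i \<in> U i" using U(2,3) by auto
    from core[OF assms(2) lsc x(2) this] obtain V where V: "openin (top_of_set X) V" "x 0 \<in> V"
      "\<forall>y\<in>V. \<exists>z\<in>Orb X F. z 0 = y \<and> (\<forall>i\<le>k. z i \<in> U i)" by blast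
    have "V \<subseteq> (\<lambda>x. x 0) ` W"
    proof
      fix y assume "y \<in> V"
      then obtain z where z: "z \<in> Orb X F" "z 0 = y" "\<forall>i\<le>k. z i \<in> U i" using V(3) by blast
      have "z i \<in> U i" for i
      proof (cases "i \<le> k")
        case False
        then have "U i = X" using k by force
        then show ?thesis using z(1) by (auto simp: Orb_def)
      qed (use z in auto)
      then have "z \<in> S" using U(4) by auto
      then show "y \<in> (\<lambda>x. x 0) ` W" using W z by auto
    qed
    then show "\<exists>T. openin (top_of_set X) T \<and> y0 \<in> T \<and> T \<subseteq> (\<lambda>x. x 0) ` W"
      using V y0 by blast
  qed
qed

end
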